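(* Let $G=(V,E)$ with $|V|=n$. Assume that there is $\alpha>0$ such that $d(v)\ge\alpha n$ for all $v\in V$ and $e(W,V\setminus W)\ge\alpha|W||V\setminus W|$ for all $W\subseteq V$. Then for all $u,w\in V$ there is $1\le d\le 8/\alpha^2+2$ such that there are at least $(\alpha^4/64)^{d+1}n^{d-1}$ paths of length $d$ from $u$ to $w$.
   Context: $d(v)$ is the degree of $v$; $e(U,W)$ is the number of edges with one endpoint in $U$ and the other in $W$; the length of a path is its number of edges. *)

theory Defs
  imports Complex_Main
begin

definition simple_graph :: "'a set \<Rightarrow> ('a \<Rightarrow> 'a \<Rightarrow> bool) \<Rightarrow> bool" where
  "simple_graph V E \<longleftrightarrow> finite V \<and> (\<forall>x y. E x y \<longrightarrow> x \<in> V \<and> y \<in> V)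
     \<and> (\<forall>x y. E x y \<longrightarrow> E y x) \<and> (\<forall>x. \<not> E x x)"

definition degree :: "'a set \<Rightarrow> ('a \<Rightarrow> 'a \<Rightarrow> bool) \<Rightarrow> 'a \<Rightarrow> nat" where
  "degree V E v = card {y \<in> V. E v y}"

text \<open>e(U,W): number of edges with one endpoint in U and the other in W
  (used for disjoint U, W, so each edge is counted once).\<close>
definition e_between :: "('a \<Rightarrow> 'a \<Rightarrow> bool) \<Rightarrow> 'a set \<Rightarrow> 'a set \<Rightarrow> nat" where
  "e_between E U W = card {(x, y). x \<in> U \<and> y \<in> W \<and> E x y}"

definition paths :: "'a set \<Rightarrow> ('a \<Rightarrow> 'a \<Rightarrow> bool) \<Rightarrow> nat \<Rightarrow> 'a \<Rightarrow> 'a \<Rightarrow> 'a list set" where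
  "paths V E d u w = {p. length p = d + 1 \<and> distinct p \<and> set p \<subseteq> V
      \<and> hd p = u \<and> last p = w \<and> (\<forall>i < d. E (p ! i) (p ! Suc i))}"

end

theory Submission
  imports Defs "HOL-Library.Transitive_Closure_Table"
begin


lemma arA: "1 \<le> l \<Longrightarrow> (c::real) ^ (l + 1) * real n ^ (l - 1) = c^2 * (c * real n)^(l - 1)"
proof -
  assume "1 \<le> l"
  then obtain i where "l = Suc i" by (metis Suc_le_D One_nat_def)
  thus ?thesis by (simp add: power_mult_distrib power_add power2_eq_square)
qed
lemma arC: "(\<alpha>::real) > 0 \<Longrightarrow> \<alpha>^2/4 * real n - \<alpha>^4/64 * real n = (16 / \<alpha>^2 - 1) * (\<alpha>^4/64 * real n)"
  by (simp add: field_simps power2_eq_square) (simp add: power_def)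
lemma arD: "(\<alpha>::real) > 0 \<Longrightarrow> \<alpha>^4/64 * (4 / \<alpha>^2 + 2) = \<alpha>^2 / 16 + \<alpha>^4 / 32"
  by (simp add: field_simps power2_eq_square) (simp add: power_def)
lemma arE: "(\<alpha>::real) > 0 \<Longrightarrow> \<alpha>^2 \<le> 1 \<Longrightarrow> 16 / \<alpha>^2 - 1 \<ge> 4 / \<alpha>^2 + 2"
proof -
  assume a: "\<alpha> > 0" "\<alpha>^2 \<le> 1"
  have "12 \<le> 12 / \<alpha>^2" using a by (simp add: field_simps)
  thus ?thesis by (simp add: diff_divide_distrib add_divide_distrib)
qed

locale LG =
  fixes V :: "'a set" and E :: "'a \<Rightarrow> 'a \<Rightarrow> bool" and n :: nat and \<alpha> :: real and u :: 'a
  assumes G: "simple_graph V E"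
    and ncard: "card V = n"
    and apos: "\<alpha> > 0"
    and degA: "\<forall>v \<in> V. real (degree V E v) \<ge> \<alpha> * real n"
    and expA: "\<forall>W \<subseteq> V. real (e_between E W (V - W)) \<ge> \<alpha> * real (card W) * real (card (V - W))"
    and uV: "u \<in> V"
begin

lemma finV: "finite V" using G by (simp add: simple_graph_def)
lemma EV: "E x y \<Longrightarrow> x \<in> V \<and> y \<in> V" using G by (simp add: simple_graph_def)
lemma Esym: "E x y \<Longrightarrow> E y x" using G by (simp add: simple_graph_def)
lemma Eirr: "\<not> E x x" using G by (simp add: simple_graph_def)

definition Nb :: "'a \<Rightarrow> 'a set" where "Nb v = {y \<in> V. E v y}"

lemma Nb_sub: "Nb v \<subseteq> V" by (auto simp: Nb_def)
lemma Nb_fin: "finite (Nb v)" using finV Nb_sub finite_subset by blast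
lemma Nb_deg: "v \<in> V \<Longrightarrow> real (card (Nb v)) \<ge> \<alpha> * real n"
  using degA by (auto simp: Nb_def degree_def)

lemma npos: "n > 0" using uV finV ncard card_gt_0_iff by blast

lemma alpha_lt1: "\<alpha> < 1"
proof -
  have "Nb u \<subseteq> V - {u}" using Eirr by (auto simp: Nb_def)
  hence "card (Nb u) \<le> card (V - {u})" using finV by (intro card_mono) auto
  also have "\<dots> = n - 1" using uV finV ncard by simp
  finally have "\<alpha> * real n \<le> real (n - 1)" using Nb_deg[OF uV] by linarith
  hence "\<alpha> * real n < real n" using npos by linarith
  thus ?thesis using npos by simp
qed

lemma e_between_sum:
  assumes "W \<subseteq> V"
  shows "e_between E W (V - W) = (\<Sum>y\<in>V - W. card (Nb y \<inter> W))"
proof -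
  have "{(x, y). x \<in> W \<and> y \<in> V - W \<and> E x y} = (\<lambda>(y,x). (x,y)) ` (SIGMA y:V - W. Nb y \<inter> W)"
    using Esym assms by (auto simp: Nb_def image_iff EV)
  moreover have "inj_on (\<lambda>(y,x). (x,y)) (SIGMA y:V - W. Nb y \<inter> W)"
    by (auto simp: inj_on_def)
  ultimately have "e_between E W (V - W) = card (SIGMA y:V - W. Nb y \<inter> W)"
    unfolding e_between_def by (simp add: card_image)
  also have "\<dots> = (\<Sum>y\<in>V - W. card (Nb y \<inter> W))"
    using finV Nb_fin by (intro card_SigmaI) auto
  finally show ?thesis .
qed

definition \<gamma> :: real where "\<gamma> = \<alpha>^2/4"

definition Phi :: "'a set \<Rightarrow> 'a set" where
  "Phi S = {v \<in> V. \<gamma> * real n \<le> real (card (Nb v \<inter> S))}"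

fun Ek :: "nat \<Rightarrow> 'a set" where
  "Ek 0 = {}"
| "Ek (Suc 0) = Nb u"
| "Ek (Suc (Suc k)) = Phi (Ek (Suc k)) \<union> Ek k"

lemma gpos: "\<gamma> * real n > 0" using apos npos by (simp add: \<gamma>_def)

lemma Phi_sub: "Phi S \<subseteq> V" by (auto simp: Phi_def)

lemma Ek_sub: "Ek k \<subseteq> V"
  by (induction k rule: Ek.induct) (auto simp: Nb_def Phi_def)

lemma Phi_Ek: "Phi (Ek k) \<subseteq> Ek (Suc k)"
proof (cases k)
  case 0
  then show ?thesis using gpos by (auto simp: Phi_def)
next
  case (Suc j) then show ?thesis by auto
qed

lemma Ek_mono2: "Ek k \<subseteq> Ek (Suc (Suc k))" by simp

definition Wk :: "nat \<Rightarrow> 'a set" where "Wk k = Ek k \<union> Ek (Suc k)"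

lemma Wk_sub: "Wk k \<subseteq> V" using Ek_sub by (auto simp: Wk_def)
lemma Wk_fin: "finite (Wk k)" using Wk_sub finV by (rule finite_subset)
lemma Wk_mono: "Wk k \<subseteq> Wk (Suc k)" by (auto simp: Wk_def)
lemma Nb_u_Wk: "Nb u \<subseteq> Wk k"
proof (induction k)
  case 0 then show ?case by (simp add: Wk_def)
next
  case (Suc k) then show ?case using Wk_mono by blast
qed

lemma Wk_big: "real (card (Wk k)) \<ge> \<alpha> * real n"
proof -
  have "card (Nb u) \<le> card (Wk k)" using Nb_u_Wk Wk_fin by (intro card_mono) auto
  thus ?thesis using Nb_deg[OF uV] by linarith
qed

definition Done :: "nat \<Rightarrow> bool" where
  "Done k \<longleftrightarrow> real (card (V - Wk k)) \<le> (\<alpha> - 2*\<gamma>) * real n"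

lemma Done_reach:
  assumes "Done k" and wV: "w \<in> V"
  shows "w \<in> Ek (Suc k) \<or> w \<in> Ek (Suc (Suc k))"
proof -
  let ?a = "card (Nb w \<inter> Ek k)" and ?b = "card (Nb w \<inter> Ek (Suc k))"
  have "Nb w \<subseteq> (Nb w \<inter> Ek k) \<union> (Nb w \<inter> Ek (Suc k)) \<union> (V - Wk k)"
    using Nb_sub by (auto simp: Wk_def)
  hence "card (Nb w) \<le> card ((Nb w \<inter> Ek k) \<union> (Nb w \<inter> Ek (Suc k)) \<union> (V - Wk k))"
    using finV Nb_fin by (intro card_mono) auto
  also have "\<dots> \<le> card ((Nb w \<inter> Ek k) \<union> (Nb w \<inter> Ek (Suc k))) + card (V - Wk k)"
    by (rule card_Un_le)
  also have "\<dots> \<le> ?a + ?b + card (V - Wk k)"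
    using card_Un_le by (metis add_le_mono1)
  finally have "real (card (Nb w)) \<le> real ?a + real ?b + real (card (V - Wk k))" by linarith
  hence "real ?a + real ?b \<ge> 2 * \<gamma> * real n"
    using Nb_deg[OF wV] assms(1) unfolding Done_def by (simp add: algebra_simps)
  hence "\<gamma> * real n \<le> real ?a \<or> \<gamma> * real n \<le> real ?b" by linarith
  thus ?thesis using wV Phi_Ek[of k] Phi_Ek[of "Suc k"] unfolding Phi_def by blast
qed

lemma growth:
  assumes "\<not> Done k"
  shows "real (card (Wk (Suc k))) \<ge> real (card (Wk k)) + \<alpha>^2 * real n / 4"
proof -
  define R where "R = V - Wk k"
  define M where "M = {r \<in> R. \<gamma> * real n \<le> real (card (Nb r \<inter> Ek (Suc k)))}"
  have finR: "finite R" using finV by (simp add: R_def)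
  have MR: "M \<subseteq> R" by (auto simp: M_def)
  have M_in: "M \<subseteq> Wk (Suc k) - Wk k"
  proof
    fix r assume "r \<in> M"
    hence "r \<in> Phi (Ek (Suc k))" "r \<in> R" by (auto simp: M_def Phi_def R_def)
    thus "r \<in> Wk (Suc k) - Wk k" using Phi_Ek[of "Suc k"] by (auto simp: Wk_def R_def)
  qed
  have cardW: "card (Wk (Suc k)) \<ge> card (Wk k) + card M"
  proof -
    have "Wk k \<union> M \<subseteq> Wk (Suc k)" using M_in Wk_mono by auto
    hence "card (Wk k \<union> M) \<le> card (Wk (Suc k))"
      using Wk_fin by (intro card_mono) auto
    moreover have "card (Wk k \<union> M) = card (Wk k) + card M"
      using M_in finV Wk_sub finite_subset finR MR
      by (intro card_Un_disjoint) (auto intro: finite_subset)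
    ultimately show ?thesis by simp
  qed
  have small_a: "real (card (Nb r \<inter> Ek k)) < \<gamma> * real n" if "r \<in> R" for r
  proof (rule ccontr)
    assume "\<not> ?thesis"
    hence "r \<in> Phi (Ek k)" using that by (auto simp: Phi_def R_def)
    hence "r \<in> Wk k" using Phi_Ek[of k] by (auto simp: Wk_def)
    thus False using that by (simp add: R_def)
  qed
  have bound: "real (card (Nb r \<inter> Wk k)) \<le> (if r \<in> M then real (card (Wk k)) else 2 * \<gamma> * real n)"
    if "r \<in> R" for r
  proof (cases "r \<in> M")
    case True
    have "card (Nb r \<inter> Wk k) \<le> card (Wk k)"
      using Wk_fin by (intro card_mono) auto
    then show ?thesis using True by simp
  next
    case False
    hence "real (card (Nb r \<inter> Ek (Suc k))) < \<gamma> * real n" using that by (auto simp: M_def)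
    moreover have "card (Nb r \<inter> Wk k) \<le> card (Nb r \<inter> Ek k) + card (Nb r \<inter> Ek (Suc k))"
    proof -
      have "Nb r \<inter> Wk k = (Nb r \<inter> Ek k) \<union> (Nb r \<inter> Ek (Suc k))" by (auto simp: Wk_def)
      thus ?thesis by (metis card_Un_le)
    qed
    ultimately show ?thesis using small_a[OF that] False by simp
  qed
  have "\<alpha> * real (card (Wk k)) * real (card R) \<le> real (e_between E (Wk k) R)"
    using expA Wk_sub by (simp add: R_def)
  also have "\<dots> = (\<Sum>r\<in>R. real (card (Nb r \<inter> Wk k)))"
    using e_between_sum[OF Wk_sub] by (simp add: R_def)
  also have "\<dots> \<le> (\<Sum>r\<in>R. (if r \<in> M then real (card (Wk k)) else 2 * \<gamma> * real n))"
    by (intro sum_mono bound)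
  also have "\<dots> = real (card M) * real (card (Wk k)) + real (card (R - M)) * (2 * \<gamma> * real n)"
  proof -
    have "(\<Sum>r\<in>R. (if r \<in> M then real (card (Wk k)) else 2 * \<gamma> * real n))
        = (\<Sum>r\<in>R \<inter> M. real (card (Wk k))) + (\<Sum>r\<in>R - M. 2 * \<gamma> * real n)"
      using finR by (simp add: sum.If_cases Diff_eq)
    also have "R \<inter> M = M" using MR by auto
    finally show ?thesis by simp
  qed
  also have "\<dots> \<le> real (card M) * real (card (Wk k)) + real (card R) * (2 * \<gamma> * real n)"
  proof -
    have "card (R - M) \<le> card R" using finR by (simp add: card_mono)
    moreover have "2 * \<gamma> * real n \<ge> 0" using gpos by linarith
    ultimately have "real (card (R - M)) * (2 * \<gamma> * real n) \<le> real (card R) * (2 * \<gamma> * real n)"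
      by (intro mult_right_mono) auto
    thus ?thesis by simp
  qed
  finally have key: "\<alpha> * real (card (Wk k)) * real (card R) \<le>
      real (card M) * real (card (Wk k)) + real (card R) * (2 * \<gamma> * real n)" .
  have WB: "real (card (Wk k)) \<ge> \<alpha> * real n" by (rule Wk_big)
  have "2 * \<gamma> * real n = (\<alpha> / 2) * (\<alpha> * real n)" by (simp add: \<gamma>_def power2_eq_square)
  also have "\<dots> \<le> (\<alpha> / 2) * real (card (Wk k))" using WB apos by simp
  finally have "real (card R) * (2 * \<gamma> * real n) \<le> real (card R) * ((\<alpha> / 2) * real (card (Wk k)))"
    by (intro mult_left_mono) auto
  with key have "(\<alpha>/2) * real (card R) * real (card (Wk k)) \<le> real (card M) * real (card (Wk k))"
    by (simp add: algebra_simps)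
  moreover have "real (card (Wk k)) > 0" using WB apos npos
    by (smt (verit) mult_pos_pos of_nat_0_less_iff)
  ultimately have Mb: "(\<alpha>/2) * real (card R) \<le> real (card M)" by simp
  have "real (card R) > (\<alpha> - 2*\<gamma>) * real n" using assms by (simp add: Done_def R_def)
  moreover have "\<alpha> - 2*\<gamma> \<ge> \<alpha> / 2"
    using alpha_lt1 apos by (simp add: \<gamma>_def power2_eq_square)
  ultimately have "real (card R) \<ge> \<alpha>/2 * real n"
    by (smt (verit) mult_right_mono of_nat_0_le_iff)
  hence "(\<alpha>/2) * real (card R) \<ge> (\<alpha>/2) * (\<alpha>/2 * real n)" using apos by (simp add: mult_left_mono)
  hence "real (card M) \<ge> \<alpha>^2 * real n / 4" using Mb by (simp add: power2_eq_square)
  thus ?thesis using cardW by linarith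
qed

lemma exists_done: "\<exists>j. real j \<le> 4 / \<alpha>^2 \<and> Done j"
proof -
  have claim: "(\<exists>j<k. Done j) \<or> real (card (Wk k)) \<ge> real k * (\<alpha>^2 * real n / 4)" for k
  proof (induction k)
    case 0 then show ?case by simp
  next
    case (Suc k)
    then show ?case
    proof
      assume "\<exists>j<k. Done j" then show ?thesis by (meson less_SucI)
    next
      assume h: "real (card (Wk k)) \<ge> real k * (\<alpha>^2 * real n / 4)"
      show ?thesis
      proof (cases "Done k")
        case True then show ?thesis by blast
      next
        case False
        from growth[OF False] h show ?thesis by (simp add: algebra_simps)
      qed
    qed
  qed
  define K where "K = nat \<lfloor>4 / \<alpha>^2\<rfloor> + 1"
  have Kgt: "real K > 4 / \<alpha>^2" unfolding K_def by linarith
  have "real (card (Wk K)) \<le> real n" using card_mono[OF finV Wk_sub] ncard by simp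
  moreover have "real K * (\<alpha>^2 * real n / 4) > real n"
  proof -
    have "real K * \<alpha>^2 > 4" using Kgt apos by (simp add: field_simps)
    hence "real K * \<alpha>^2 * real n > 4 * real n" using npos by simp
    thus ?thesis by (simp add: algebra_simps)
  qed
  ultimately have "\<not> (real K * (\<alpha>^2 * real n / 4) \<le> real (card (Wk K)))" by linarith
  then obtain j where "j < K" "Done j" using claim[of K] by blast
  moreover have "real j \<le> 4 / \<alpha>^2"
  proof -
    have "j \<le> nat \<lfloor>4 / \<alpha>^2\<rfloor>" using \<open>j < K\<close> K_def by simp
    hence "real j \<le> real_of_int \<lfloor>4 / \<alpha>^2\<rfloor>" using apos by (simp add: le_nat_iff)
    thus ?thesis by linarith
  qed
  ultimately show ?thesis by blast
qed

lemma paths_fin: "finite (paths V E l a b)"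
proof -
  have "paths V E l a b \<subseteq> {xs. set xs \<subseteq> V \<and> length xs = Suc l}" by (auto simp: paths_def)
  moreover have "finite {xs. set xs \<subseteq> V \<and> length xs = Suc l}" by (rule finite_lists_length_eq[OF finV])
  ultimately show ?thesis by (rule finite_subset)
qed

lemma path_ext:
  assumes p: "p \<in> paths V E l a y" and e: "E y x" and nx: "x \<notin> set p"
  shows "p @ [x] \<in> paths V E (Suc l) a x"
proof -
  have lp: "length p = Suc l" and dp: "distinct p" and sp: "set p \<subseteq> V" and hp: "hd p = a"
    and lastp: "last p = y" and ep: "\<forall>i<l. E (p ! i) (p ! Suc i)"
    using p by (auto simp: paths_def)
  have pne: "p \<noteq> []" using lp by auto
  have py: "p ! l = y" using lastp pne lp by (simp add: last_conv_nth)
  have "\<forall>i<Suc l. E ((p @ [x]) ! i) ((p @ [x]) ! Suc i)"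
  proof (intro allI impI)
    fix i assume i: "i < Suc l"
    show "E ((p @ [x]) ! i) ((p @ [x]) ! Suc i)"
    proof (cases "i < l")
      case True
      then show ?thesis using ep lp by (simp add: nth_append)
    next
      case False
      hence "i = l" using i by simp
      then show ?thesis using py e lp by (simp add: nth_append)
    qed
  qed
  moreover have "x \<in> V" using EV e by blast
  ultimately show ?thesis using lp dp sp hp pne nx by (auto simp: paths_def)
qed

definition PS :: "'a set \<Rightarrow> nat \<Rightarrow> 'a \<Rightarrow> 'a list set" where
  "PS F l x = {p \<in> paths V E l u x. set p \<inter> F = {}}"

lemma PS_fin: "finite (PS F l x)" using paths_fin[of l u x] by (simp add: PS_def)

lemma PS_count:
  assumes Y: "finite Y" "\<forall>y\<in>Y. E y x" and xF: "x \<notin> F"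
  shows "(\<Sum>y\<in>Y. card (PS (insert x F) l y)) \<le> card (PS F (Suc l) x)"
proof -
  let ?f = "\<lambda>p. p @ [x]"
  have "(\<Sum>y\<in>Y. card (PS (insert x F) l y)) = (\<Sum>y\<in>Y. card (?f ` PS (insert x F) l y))"
    by (intro sum.cong refl card_image[symmetric]) (auto simp: inj_on_def)
  also have "\<dots> = card (\<Union>y\<in>Y. ?f ` PS (insert x F) l y)"
  proof (rule card_UN_disjoint[symmetric])
    show "finite Y" by fact
    show "\<forall>i\<in>Y. finite (?f ` PS (insert x F) l i)" using PS_fin by auto
    show "\<forall>i\<in>Y. \<forall>j\<in>Y. i \<noteq> j \<longrightarrow> ?f ` PS (insert x F) l i \<inter> ?f ` PS (insert x F) l j = {}"
      by (auto simp: PS_def paths_def)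
  qed
  also have "\<dots> \<le> card (PS F (Suc l) x)"
  proof (rule card_mono[OF PS_fin])
    show "(\<Union>y\<in>Y. ?f ` PS (insert x F) l y) \<subseteq> PS F (Suc l) x"
    proof safe
      fix y p assume yY: "y \<in> Y" and pP: "p \<in> PS (insert x F) l y"
      hence "p \<in> paths V E l u y" "x \<notin> set p" "set p \<inter> F = {}" by (auto simp: PS_def)
      hence "p @ [x] \<in> paths V E (Suc l) u x" using path_ext Y yY by blast
      thus "p @ [x] \<in> PS F (Suc l) x" using \<open>set p \<inter> F = {}\<close> xF by (auto simp: PS_def)
    qed
  qed
  finally show ?thesis .
qed

lemma weighted:
  assumes mpos: "\<gamma> * real n - real d > 0"
  shows "\<forall>x F. x \<in> Ek j \<longrightarrow> x \<noteq> u \<longrightarrow> x \<notin> F \<longrightarrow> u \<notin> F \<longrightarrow> finite F \<longrightarrow> card F + j \<le> d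
     \<longrightarrow> 1 \<le> (\<Sum>i<j. real (card (PS F (Suc i) x)) / (\<gamma> * real n - real d)^i)"
proof (induction j rule: Ek.induct)
  case 1 then show ?case by simp
next
  case 2
  show ?case
  proof (intro allI impI)
    fix x F assume x: "x \<in> Ek (Suc 0)" "x \<noteq> u" "x \<notin> F" "u \<notin> F" "finite F" "card F + Suc 0 \<le> d"
    have "[u, x] \<in> PS F (Suc 0) x" using x uV by (auto simp: PS_def paths_def Nb_def)
    hence "1 \<le> card (PS F (Suc 0) x)" using PS_fin by (metis One_nat_def Suc_leI card_gt_0_iff empty_iff)
    thus "1 \<le> (\<Sum>i<Suc 0. real (card (PS F (Suc i) x)) / (\<gamma> * real n - real d)^i)" by simp
  qed
next
  case (3 k)
  let ?m = "\<gamma> * real n - real d"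
  let ?S = "\<lambda>F x j. (\<Sum>i<j. real (card (PS F (Suc i) x)) / ?m^i)"
  show ?case
  proof (intro allI impI)
    fix x F assume x: "x \<in> Ek (Suc (Suc k))" "x \<noteq> u" "x \<notin> F" "u \<notin> F" "finite F"
      "card F + Suc (Suc k) \<le> d"
    have nonneg: "\<And>G z i. 0 \<le> real (card (PS G (Suc i) z)) / ?m^i" using mpos by simp
    show "1 \<le> ?S F x (Suc (Suc k))"
    proof (cases "x \<in> Ek k")
      case True
      have "1 \<le> ?S F x k" using "3.IH"(2) True x by auto
      also have "\<dots> \<le> ?S F x (Suc (Suc k))"
        by (intro sum_mono2) (auto simp: nonneg)
      finally show ?thesis .
    next
      case False
      hence xP: "x \<in> Phi (Ek (Suc k))" using x(1) by simp
      define Y where "Y = (Nb x \<inter> Ek (Suc k)) - insert u F"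
      have finY: "finite Y" using Nb_fin by (simp add: Y_def)
      have YE: "\<forall>y\<in>Y. E y x" using Esym by (auto simp: Y_def Nb_def)
      have cardY: "real (card Y) \<ge> ?m"
      proof -
        have "card (Nb x \<inter> Ek (Suc k)) - card (insert u F) \<le> card Y"
          unfolding Y_def by (rule diff_card_le_card_Diff) (simp add: x(5))
        moreover have "card (insert u F) = Suc (card F)" using x by simp
        moreover have "\<gamma> * real n \<le> real (card (Nb x \<inter> Ek (Suc k)))" using xP by (simp add: Phi_def)
        ultimately show ?thesis using x(6) by linarith
      qed
      have IHy: "1 \<le> ?S (insert x F) y (Suc k)" if "y \<in> Y" for y
      proof -
        have "y \<noteq> x" using that Eirr by (auto simp: Y_def Nb_def)
        hence "y \<in> Ek (Suc k) \<and> y \<noteq> u \<and> y \<notin> insert x F \<and> u \<notin> insert x F \<and> finite (insert x F)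
           \<and> card (insert x F) + Suc k \<le> d"
          using that x card_insert_le[of F x] by (auto simp: Y_def card_insert_if)
        thus ?thesis using "3.IH"(1) by blast
      qed
      have "1 \<le> real (card Y) / ?m" using cardY mpos by simp
      also have "\<dots> = (\<Sum>y\<in>Y. 1) / ?m" by simp
      also have "\<dots> \<le> (\<Sum>y\<in>Y. ?S (insert x F) y (Suc k)) / ?m"
        using mpos by (intro divide_right_mono sum_mono IHy) auto
      also have "\<dots> = (\<Sum>i<Suc k. (\<Sum>y\<in>Y. real (card (PS (insert x F) (Suc i) y))) / ?m^(Suc i))"
      proof -
        have "(\<Sum>y\<in>Y. ?S (insert x F) y (Suc k)) / ?m
            = (\<Sum>y\<in>Y. \<Sum>i<Suc k. real (card (PS (insert x F) (Suc i) y)) / ?m^(Suc i))"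
          by (simp only: sum_divide_distrib power_Suc divide_divide_eq_left mult.commute)
        also have "\<dots> = (\<Sum>i<Suc k. \<Sum>y\<in>Y. real (card (PS (insert x F) (Suc i) y)) / ?m^(Suc i))"
          by (rule sum.swap)
        also have "\<dots> = (\<Sum>i<Suc k. (\<Sum>y\<in>Y. real (card (PS (insert x F) (Suc i) y))) / ?m^(Suc i))"
          by (simp only: sum_divide_distrib)
        finally show ?thesis .
      qed
      also have "\<dots> \<le> (\<Sum>i<Suc k. real (card (PS F (Suc (Suc i)) x)) / ?m^(Suc i))"
      proof (intro sum_mono divide_right_mono)
        fix i
        show "(\<Sum>y\<in>Y. real (card (PS (insert x F) (Suc i) y))) \<le> real (card (PS F (Suc (Suc i)) x))"
          using PS_count[OF finY YE x(3), of "Suc i"] by (simp flip: of_nat_sum)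
        show "0 \<le> ?m^(Suc i)" using mpos by simp
      qed
      also have "\<dots> \<le> ?S F x (Suc (Suc k))"
        by (simp only: sum.lessThan_Suc_shift[of _ "Suc k"]) (simp add: nonneg)
      finally show ?thesis .
    qed
  qed
qed

lemma walk_exists:
  "x \<in> Ek j \<Longrightarrow> \<exists>xs. rtrancl_path E x xs u \<and> length xs \<le> j \<and> set xs \<subseteq> V"
proof (induction j arbitrary: x rule: Ek.induct)
  case 1 then show ?case by simp
next
  case 2
  hence "E x u" using Esym by (auto simp: Nb_def)
  hence "rtrancl_path E x [u] u" by (intro rtrancl_path.step rtrancl_path.base)
  then show ?case using uV by force
next
  case (3 k)
  show ?case
  proof (cases "x \<in> Ek k")
    case True
    then show ?thesis using "3.IH"(2) by (meson le_SucI)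
  next
    case False
    hence "x \<in> Phi (Ek (Suc k))" using "3.prems" by simp
    hence "\<gamma> * real n \<le> real (card (Nb x \<inter> Ek (Suc k)))" by (simp add: Phi_def)
    hence "card (Nb x \<inter> Ek (Suc k)) > 0" using gpos by linarith
    then obtain y where y: "y \<in> Nb x" "y \<in> Ek (Suc k)" by (metis card_gt_0_iff ex_in_conv IntE)
    obtain ys where ys: "rtrancl_path E y ys u" "length ys \<le> Suc k" "set ys \<subseteq> V"
      using "3.IH"(1)[OF y(2)] by blast
    have "rtrancl_path E x (y # ys) u" using y ys by (intro rtrancl_path.step) (auto simp: Nb_def)
    then show ?thesis using ys y Nb_sub by (intro exI[of _ "y # ys"]) auto
  qed
qed

lemma walk_to_path:
  "rtrancl_path E a xs b \<Longrightarrow> set (a # xs) \<subseteq> V \<Longrightarrow> distinct (a # xs)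
    \<Longrightarrow> rev (a # xs) \<in> paths V E (length xs) b a"
proof (induction rule: rtrancl_path.induct)
  case (base x)
  then show ?case by (simp add: paths_def)
next
  case (step x y ys z)
  have "rev (y # ys) \<in> paths V E (length ys) z y" using step by auto
  moreover have "E y x" using step Esym by blast
  moreover have "x \<notin> set (rev (y # ys))" using step by auto
  ultimately have "rev (y # ys) @ [x] \<in> paths V E (Suc (length ys)) z x" by (rule path_ext)
  then show ?case by simp
qed

lemma path_exists:
  assumes "w \<in> Ek j" "w \<noteq> u" "w \<in> V"
  shows "\<exists>l. 1 \<le> l \<and> l \<le> j \<and> paths V E l u w \<noteq> {}"
proof -
  obtain xs where xs: "rtrancl_path E w xs u" "length xs \<le> j" "set xs \<subseteq> V"
    using walk_exists[OF assms(1)] by blast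
  obtain ys where ys: "rtrancl_path E w ys u" "distinct (w # ys)" "set ys \<subseteq> set xs"
    using rtrancl_path_distinct[OF xs(1)] by blast
  have "length ys = card (set ys)" using ys(2) by (simp add: distinct_card)
  also have "\<dots> \<le> card (set xs)" using ys(3) by (simp add: card_mono)
  also have "\<dots> \<le> length xs" by (rule card_length)
  finally have l1: "length ys \<le> j" using xs(2) by simp
  have "ys \<noteq> []" using ys(1) assms(2) rtrancl_path.cases by fastforce
  hence l2: "1 \<le> length ys" by (cases ys) auto
  have "rev (w # ys) \<in> paths V E (length ys) u w"
    using walk_to_path[OF ys(1)] ys xs(3) assms(3) by auto
  thus ?thesis using l1 l2 by blast
qed

lemma PS_empty: "PS {} l x = paths V E l u x" by (simp add: PS_def)

lemma main:
  assumes wV: "w \<in> V" and uw: "u \<noteq> w"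
  shows "\<exists>d::nat. 1 \<le> d \<and> real d \<le> 8 / \<alpha>^2 + 2 \<and>
           real (card (paths V E d u w)) \<ge> (\<alpha>^4 / 64) ^ (d + 1) * real n ^ (d - 1)"
proof -
  obtain j where j: "real j \<le> 4 / \<alpha>^2" "Done j" using exists_done by blast
  obtain d0 where d0: "w \<in> Ek d0" "1 \<le> d0" "real d0 \<le> 4 / \<alpha>^2 + 2"
  proof (cases "w \<in> Ek (Suc j)")
    case True
    have "real (Suc j) \<le> 4 / \<alpha>^2 + 2" using j by simp
    then show ?thesis using that[of "Suc j"] True by simp
  next
    case False
    hence "w \<in> Ek (Suc (Suc j))" using Done_reach[OF j(2) wV] by blast
    moreover have "real (Suc (Suc j)) \<le> 4 / \<alpha>^2 + 2" using j by simp
    ultimately show ?thesis using that[of "Suc (Suc j)"] by simp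
  qed
  define c where "c = \<alpha>^4 / 64"
  have a1: "\<alpha> < 1" by (rule alpha_lt1)
  have a2: "\<alpha>^2 \<le> 1" using a1 apos by (simp add: power_le_one)
  have cpos: "c > 0" using apos by (simp add: c_def)
  have c1: "c \<le> 1"
  proof -
    have "\<alpha>^4 \<le> 1" using a1 apos by (simp add: power_le_one)
    thus ?thesis by (simp add: c_def)
  qed
  have Dle: "4 / \<alpha>^2 + 2 \<le> 8 / \<alpha>^2 + 2" using apos by (simp add: divide_right_mono)
  have target: "(\<alpha>^4 / 64) ^ (l + 1) * real n ^ (l - 1) = c^2 * (c * real n)^(l - 1)" if "1 \<le> l" for l
    unfolding c_def[symmetric] using that by (rule arA)
  show ?thesis
  proof (cases "c * real n < 1")
    case True
    obtain l where l: "1 \<le> l" "l \<le> d0" "paths V E l u w \<noteq> {}"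
      using path_exists[OF d0(1) uw[symmetric] wV] by blast
    have "1 \<le> card (paths V E l u w)" using l(3) paths_fin by (metis One_nat_def Suc_leI card_gt_0_iff)
    moreover have "c^2 * (c * real n)^(l - 1) \<le> 1"
    proof -
      have "(c * real n)^(l - 1) \<le> 1" using True cpos by (intro power_le_one) auto
      moreover have "c^2 \<le> 1" using c1 cpos by (simp add: power_le_one)
      ultimately show ?thesis using cpos by (simp add: mult_le_one)
    qed
    ultimately show ?thesis using target[OF l(1)] l d0 Dle
      by (intro exI[of _ l]) auto
  next
    case False
    define m where "m = \<gamma> * real n - real d0"
    have mbig: "m \<ge> c * real n"
    proof -
      have "\<gamma> * real n - c * real n = (16 / \<alpha>^2 - 1) * (c * real n)"
        unfolding \<gamma>_def c_def by (rule arC[OF apos])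
      also have "\<dots> \<ge> (16 / \<alpha>^2 - 1) * 1"
      proof (rule mult_left_mono)
        show "1 \<le> c * real n" using False by simp
        show "0 \<le> 16 / \<alpha>^2 - 1" using arE[OF apos a2] apos by (smt (verit) divide_nonneg_nonneg zero_le_power)
      qed
      finally have "\<gamma> * real n - c * real n \<ge> 16 / \<alpha>^2 - 1" by simp
      moreover note arE[OF apos a2]
      ultimately show ?thesis using d0(3) by (simp add: m_def)
    qed
    have mpos: "\<gamma> * real n - real d0 > 0" using mbig False m_def by simp
    have "1 \<le> (\<Sum>i<d0. real (card (PS {} (Suc i) w)) / m^i)"
      using weighted[OF mpos, of d0] d0 uw by (simp add: m_def)
    hence S: "1 \<le> (\<Sum>i<d0. real (card (paths V E (Suc i) u w)) / m^i)" by (simp add: PS_empty)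
    have "\<exists>i<d0. real (card (paths V E (Suc i) u w)) / m^i \<ge> 1 / real d0"
    proof (rule ccontr)
      assume "\<not> ?thesis"
      hence "\<forall>i\<in>{..<d0}. real (card (paths V E (Suc i) u w)) / m^i < 1 / real d0" by auto
      hence "(\<Sum>i<d0. real (card (paths V E (Suc i) u w)) / m^i) < (\<Sum>i<d0. 1 / real d0)"
        using d0(2) by (intro sum_strict_mono) (auto simp: lessThan_empty_iff)
      also have "\<dots> = 1" using d0(2) by simp
      finally show False using S by simp
    qed
    then obtain i where i: "i < d0" "real (card (paths V E (Suc i) u w)) / m^i \<ge> 1 / real d0" by blast
    have mp: "m > 0" using mpos m_def by simp
    have cd: "c^2 * real d0 \<le> 1"
    proof -
      have "c * real d0 \<le> c * (4 / \<alpha>^2 + 2)" using d0(3) cpos by (simp add: mult_left_mono)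
      also have "\<dots> = \<alpha>^2 / 16 + \<alpha>^4 / 32" unfolding c_def by (rule arD[OF apos])
      also have "\<dots> \<le> 1"
      proof -
        have "\<alpha>^4 \<le> 1" using a1 apos by (simp add: power_le_one)
        thus ?thesis using a2 by simp
      qed
      finally have "c * real d0 \<le> 1" .
      hence "c * (c * real d0) \<le> c * 1" using cpos by (intro mult_left_mono) auto
      thus ?thesis using c1 by (simp add: power2_eq_square mult.assoc)
    qed
    have "real (card (paths V E (Suc i) u w)) \<ge> m^i / real d0"
      using i(2) mp by (simp add: field_simps)
    moreover have "m^i / real d0 \<ge> c^2 * (c * real n)^i"
    proof -
      have "(c * real n)^i \<le> m^i" using mbig cpos by (intro power_mono) auto
      moreover have "c^2 \<le> 1 / real d0" using cd d0(2) by (simp add: field_simps)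
      ultimately have "c^2 * (c * real n)^i \<le> (1 / real d0) * m^i"
        using cpos by (intro mult_mono) auto
      thus ?thesis by simp
    qed
    ultimately have "real (card (paths V E (Suc i) u w)) \<ge> (\<alpha>^4 / 64) ^ (Suc i + 1) * real n ^ (Suc i - 1)"
      using target[of "Suc i"] by simp
    moreover have "real (Suc i) \<le> 8 / \<alpha>^2 + 2" using i(1) d0(3) Dle by simp
    ultimately show ?thesis by (intro exI[of _ "Suc i"]) auto
  qed
qed

end

theorem lemma2p11:
  fixes V :: "'a set" and E :: "'a \<Rightarrow> 'a \<Rightarrow> bool" and n :: nat and \<alpha> :: real
  assumes G: "simple_graph V E"
    and n: "card V = n"
    and alpha_pos: "\<alpha> > 0"
    and deg: "\<forall>v \<in> V. real (degree V E v) \<ge> \<alpha> * real n"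
    and exp: "\<forall>W \<subseteq> V. real (e_between E W (V - W)) \<ge> \<alpha> * real (card W) * real (card (V - W))"
    and u: "u \<in> V" and w: "w \<in> V" and uw: "u \<noteq> w"
  shows "\<exists>d::nat. 1 \<le> d \<and> real d \<le> 8 / \<alpha>^2 + 2 \<and>
           real (card (paths V E d u w)) \<ge> (\<alpha>^4 / 64) ^ (d + 1) * real n ^ (d - 1)"
proof -
  interpret LG V E n \<alpha> u
    by (rule LG.intro) (use G n alpha_pos deg exp u in auto)
  show ?thesis by (rule main[OF w uw])
qed

end
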